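(* Let $m$ be an even positive integer, let $q,k$ be positive integers, $n=q(k-1)+1$, and ${\bf h}\in\mathbb{R}^{qm(k-1)+1}$. Let $\mathcal{H}_m$ be the $m^{\rm th}$-order $n$-dimensional Hankel tensor and $\mathcal{H}_{qm}$ the $(qm)^{\rm th}$-order $k$-dimensional Hankel tensor, both generated by ${\bf h}$ (i.e. entries $h_{i_1+i_2+\cdots}$, indices starting at $0$). Define $c_1=\min_{0\ne{\bf y}\in\mathbb{R}^k}\|{\bf y}^{\ast q}\|_m^m/\|{\bf y}\|_{qm}^{qm}$ and $c_2=\max_{0\ne{\bf y}\in\mathbb{R}^k}\|{\bf y}^{\ast q}\|_m^m/\|{\bf y}\|_{qm}^{qm}$ (positive constants depending on $m,n,q$). Then $\lambda_{\min}(\mathcal{H}_{qm})\ge c_1\,\lambda_{\min}(\mathcal{H}_m)$ if $\mathcal{H}_{qm}$ is positive semi-definite, and $\lambda_{\min}(\mathcal{H}_{qm})\ge c_2\,\lambda_{\min}(\mathcal{H}_m)$ otherwise; and $\lambda_{\max}(\mathcal{H}_{qm})\le c_1\,\lambda_{\max}(\mathcal{H}_m)$ if $\mathcal{H}_{qm}$ is negative semi-definite, and $\lambda_{\max}(\mathcal{H}_{qm})\le c_2\,\lambda_{\max}(\mathcal{H}_m)$ otherwise.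
   Context: For ${\bf u}\in\mathbb{R}^{n_1}$, ${\bf v}\in\mathbb{R}^{n_2}$ (indexed from $0$), the convolution ${\bf u}\ast{\bf v}\in\mathbb{R}^{n_1+n_2-1}$ has entries $({\bf u}\ast{\bf v})_j=\sum_{i=0}^j u_iv_{j-i}$ (with $u_i=0$ for $i\ge n_1$, $v_i=0$ for $i\ge n_2$); ${\bf y}^{\ast q}={\bf y}\ast\cdots\ast{\bf y}$ ($q$ factors), so ${\bf y}^{\ast q}\in\mathbb{R}^{q(k-1)+1}=\mathbb{R}^n$ for ${\bf y}\in\mathbb{R}^k$. $\|\cdot\|_p$ is the $\ell_p$-norm. For a real $m^{\rm th}$-order $n$-dimensional tensor $\mathcal{T}$, $(\mathcal{T}{\bf x}^{m-1})_i=\sum_{i_2,\dots,i_m}\mathcal{T}_{i i_2\dots i_m}x_{i_2}\cdots x_{i_m}$; a real $\lambda$ is an H-eigenvalue if there is nonzero ${\bf x}\in\mathbb{R}^n$ with $\mathcal{T}{\bf x}^{m-1}=\lambda{\bf x}^{[m-1]}$, where ${\bf x}^{[m-1]}=(x_1^{m-1},\dots,x_n^{m-1})^\top$. $\lambda_{\min}(\cdot)$, $\lambda_{\max}(\cdot)$ denote the smallest and largest H-eigenvalue. An even-order tensor is positive (negative) semi-definite if $\mathcal{T}{\bf x}^m\ge0$ ($\le 0$) for all real ${\bf x}$, where $\mathcal{T}{\bf x}^m=\sum\mathcal{T}_{i_1\dots i_m}x_{i_1}\cdots x_{i_m}$. *)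

theory Defs
  imports Complex_Main
begin

text \<open>Vectors in R^n are functions nat => real; only indices 0..n-1 matter.
  A real m-th order n-dimensional tensor is a function from index lists
  (of length m, entries in 0..n-1) to real.\<close>

definition index_lists :: "nat \<Rightarrow> nat \<Rightarrow> nat list set" where
  "index_lists len n = {is. length is = len \<and> set is \<subseteq> {..<n}}"

definition tensor_apply :: "nat \<Rightarrow> nat \<Rightarrow> (nat list \<Rightarrow> real) \<Rightarrow> (nat \<Rightarrow> real) \<Rightarrow> nat \<Rightarrow> real" where
  "tensor_apply m n T x i = (\<Sum>is\<in>index_lists (m - 1) n. T (i # is) * prod_list (map x is))"

definition tensor_form :: "nat \<Rightarrow> nat \<Rightarrow> (nat list \<Rightarrow> real) \<Rightarrow> (nat \<Rightarrow> real) \<Rightarrow> real" where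
  "tensor_form m n T x = (\<Sum>is\<in>index_lists m n. T is * prod_list (map x is))"

definition is_H_eigenvalue :: "nat \<Rightarrow> nat \<Rightarrow> (nat list \<Rightarrow> real) \<Rightarrow> real \<Rightarrow> bool" where
  "is_H_eigenvalue m n T lam \<longleftrightarrow>
     (\<exists>x::nat \<Rightarrow> real. (\<exists>i<n. x i \<noteq> 0) \<and>
        (\<forall>i<n. tensor_apply m n T x i = lam * x i ^ (m - 1)))"

definition lambda_min :: "nat \<Rightarrow> nat \<Rightarrow> (nat list \<Rightarrow> real) \<Rightarrow> real" where
  "lambda_min m n T = Inf {lam. is_H_eigenvalue m n T lam}"

definition lambda_max :: "nat \<Rightarrow> nat \<Rightarrow> (nat list \<Rightarrow> real) \<Rightarrow> real" where
  "lambda_max m n T = Sup {lam. is_H_eigenvalue m n T lam}"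

definition psd_tensor :: "nat \<Rightarrow> nat \<Rightarrow> (nat list \<Rightarrow> real) \<Rightarrow> bool" where
  "psd_tensor m n T \<longleftrightarrow> (\<forall>x. tensor_form m n T x \<ge> 0)"

definition nsd_tensor :: "nat \<Rightarrow> nat \<Rightarrow> (nat list \<Rightarrow> real) \<Rightarrow> bool" where
  "nsd_tensor m n T \<longleftrightarrow> (\<forall>x. tensor_form m n T x \<le> 0)"

definition hankel_tensor :: "(nat \<Rightarrow> real) \<Rightarrow> nat list \<Rightarrow> real" where
  "hankel_tensor h is = h (sum_list is)"

definition conv :: "(nat \<Rightarrow> real) \<Rightarrow> (nat \<Rightarrow> real) \<Rightarrow> nat \<Rightarrow> real" where
  "conv u v j = (\<Sum>i\<le>j. u i * v (j - i))"

fun conv_pow :: "(nat \<Rightarrow> real) \<Rightarrow> nat \<Rightarrow> nat \<Rightarrow> real" where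
  "conv_pow y 0 = (\<lambda>j. if j = 0 then 1 else 0)"
| "conv_pow y (Suc q) = conv y (conv_pow y q)"

definition trunc_vec :: "nat \<Rightarrow> (nat \<Rightarrow> real) \<Rightarrow> nat \<Rightarrow> real" where
  "trunc_vec k y = (\<lambda>i. if i < k then y i else 0)"

definition pnorm_pow :: "nat \<Rightarrow> nat \<Rightarrow> (nat \<Rightarrow> real) \<Rightarrow> real" where
  "pnorm_pow d p v = (\<Sum>i<d. \<bar>v i\<bar> ^ p)"

definition conv_ratio :: "nat \<Rightarrow> nat \<Rightarrow> nat \<Rightarrow> (nat \<Rightarrow> real) \<Rightarrow> real" where
  "conv_ratio m q k y =
     pnorm_pow (q * (k - 1) + 1) m (conv_pow (trunc_vec k y) q) / pnorm_pow k (q * m) y"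

definition nonzero_vec :: "nat \<Rightarrow> (nat \<Rightarrow> real) \<Rightarrow> bool" where
  "nonzero_vec k y \<longleftrightarrow> (\<exists>i<k. y i \<noteq> 0)"

definition c1_const :: "nat \<Rightarrow> nat \<Rightarrow> nat \<Rightarrow> real" where
  "c1_const m q k = Inf {conv_ratio m q k y | y. nonzero_vec k y}"

definition c2_const :: "nat \<Rightarrow> nat \<Rightarrow> nat \<Rightarrow> real" where
  "c2_const m q k = Sup {conv_ratio m q k y | y. nonzero_vec k y}"

end

theory Submission imports Defs "HOL-Analysis.Analysis" "HOL-Computational_Algebra.Polynomial" begin

definition Lf :: "(nat \<Rightarrow> real) \<Rightarrow> real poly \<Rightarrow> real" where
  "Lf h Q = (\<Sum>s\<le>degree Q. h s * coeff Q s)"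

definition Pv :: "nat \<Rightarrow> (nat \<Rightarrow> real) \<Rightarrow> real poly" where
  "Pv d x = (\<Sum>j<d. monom (x j) j)"

lemma Lf_eq: "degree Q \<le> N \<Longrightarrow> Lf h Q = (\<Sum>s\<le>N. h s * coeff Q s)"
  unfolding Lf_def
  by (rule sum.mono_neutral_left) (auto simp: coeff_eq_0)

lemma Lf_add: "Lf h (A + B) = Lf h A + Lf h B"
proof -
  let ?N = "max (degree A) (degree B)"
  have "degree (A + B) \<le> ?N" by (simp add: degree_add_le)
  then show ?thesis
    by (simp add: Lf_eq[of _ ?N] sum.distrib distrib_left)
qed

lemma Lf_smult: "Lf h (smult c A) = c * Lf h A"
proof -
  have "degree (smult c A) \<le> degree A" by simp
  then show ?thesis by (simp add: Lf_eq[of _ "degree A"] sum_distrib_left Lf_def mult_ac)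
qed

lemma Lf_0[simp]: "Lf h 0 = 0" by (simp add: Lf_def)

lemma Lf_sum: "Lf h (\<Sum>i\<in>A. f i) = (\<Sum>i\<in>A. Lf h (f i))"
  by (induction A rule: infinite_finite_induct) (auto simp: Lf_add)

lemma Lf_shift: "Lf h (monom c i * Q) = c * Lf (\<lambda>s. h (i + s)) Q"
proof -
  let ?D = "degree Q"
  have dg: "degree (monom c i * Q) \<le> i + ?D"
    by (rule order_trans[OF degree_mult_le]) (simp add: degree_monom_le)
  have "Lf h (monom c i * Q) = (\<Sum>s\<le>i + ?D. h s * (if s < i then 0 else c * coeff Q (s - i)))"
    using Lf_eq[OF dg] by (simp add: coeff_monom_mult)
  also have "\<dots> = (\<Sum>s\<in>(+) i ` {..?D}. h s * (if s < i then 0 else c * coeff Q (s - i)))"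
  proof (rule sum.mono_neutral_right)
    have "\<And>s. i \<le> s \<Longrightarrow> s \<le> i + ?D \<Longrightarrow> s \<in> (+) i ` {..?D}"
      by (rule_tac x="s - i" in image_eqI) auto
    then show "\<forall>s\<in>{..i + ?D} - (+) i ` {..?D}. h s * (if s < i then 0 else c * coeff Q (s - i)) = 0"
      by force
  qed auto
  also have "\<dots> = (\<Sum>t\<le>?D. h (i + t) * (c * coeff Q t))"
    by (subst sum.reindex) auto
  also have "\<dots> = c * Lf (\<lambda>s. h (i + s)) Q"
    by (simp add: Lf_def sum_distrib_left mult_ac)
  finally show ?thesis .
qed

lemma index_lists_Suc:
  "index_lists (Suc p) d = (\<lambda>(i, is). i # is) ` ({..<d} \<times> index_lists p d)"
  unfolding index_lists_def
  by (auto simp: length_Suc_conv image_iff)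

lemma finite_index_lists: "finite (index_lists p d)"
proof -
  have "index_lists p d = {xs. set xs \<subseteq> {..<d} \<and> length xs = p}"
    by (auto simp: index_lists_def)
  then show ?thesis using finite_lists_length_eq[of "{..<d}" p] by simp
qed

lemma sum_index_lists_Suc:
  "(\<Sum>is\<in>index_lists (Suc p) d. f is) = (\<Sum>i<d. \<Sum>is\<in>index_lists p d. f (i # is))"
proof -
  have inj: "inj_on (\<lambda>(i, is). i # is) ({..<d} \<times> index_lists p d)"
    by (auto simp: inj_on_def)
  show ?thesis
    unfolding index_lists_Suc sum.reindex[OF inj] o_def
    by (simp add: sum.cartesian_product finite_index_lists split_def)
qed

lemma tf_Suc: "tensor_form (Suc p) d (hankel_tensor h) x =
   (\<Sum>i<d. x i * tensor_form p d (hankel_tensor (\<lambda>s. h (i + s))) x)"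
  unfolding tensor_form_def sum_index_lists_Suc
  by (simp add: hankel_tensor_def sum_distrib_left mult_ac)

lemma tf_poly: "tensor_form p d (hankel_tensor h) x = Lf h (Pv d x ^ p)"
proof (induction p arbitrary: h)
  case 0
  have "index_lists 0 d = {[]}" by (auto simp: index_lists_def)
  then show ?case by (simp add: tensor_form_def hankel_tensor_def Lf_def)
next
  case (Suc p)
  have "tensor_form (Suc p) d (hankel_tensor h) x = (\<Sum>i<d. x i * Lf (\<lambda>s. h (i + s)) (Pv d x ^ p))"
    by (simp add: tf_Suc Suc)
  also have "\<dots> = (\<Sum>i<d. Lf h (monom (x i) i * Pv d x ^ p))"
    by (simp add: Lf_shift)
  also have "\<dots> = Lf h (Pv d x ^ Suc p)"
    by (simp add: Lf_sum[symmetric] Pv_def sum_distrib_right)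
  finally show ?case .
qed

lemma ta_poly: "0 < p \<Longrightarrow> tensor_apply p d (hankel_tensor h) x i = Lf h (monom 1 i * Pv d x ^ (p - 1))"
proof -
  have "tensor_apply p d (hankel_tensor h) x i = tensor_form (p - 1) d (hankel_tensor (\<lambda>s. h (i + s))) x"
    by (simp add: tensor_apply_def tensor_form_def hankel_tensor_def)
  then show ?thesis by (simp add: tf_poly Lf_shift)
qed

lemma tf_apply: "0 < p \<Longrightarrow> tensor_form p d T x = (\<Sum>i<d. x i * tensor_apply p d T x i)"
proof -
  assume "0 < p"
  then obtain p' where p: "p = Suc p'" by (cases p) auto
  show ?thesis unfolding p tensor_form_def tensor_apply_def sum_index_lists_Suc
    by (simp add: sum_distrib_left mult_ac)
qed


lemma coeff_Pv: "coeff (Pv d x) i = (if i < d then x i else 0)"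
  by (simp add: Pv_def coeff_sum coeff_monom)

lemma coeff_Pv_trunc: "coeff (Pv k y) = trunc_vec k y"
  by (simp add: fun_eq_iff coeff_Pv trunc_vec_def)

lemma conv_coeff: "conv (coeff A) (coeff B) = coeff (A * B)"
  by (simp add: conv_def coeff_mult fun_eq_iff)

lemma conv_pow_coeff: "conv_pow (coeff A) q = coeff (A ^ q)"
proof (induction q)
  case (Suc q) then show ?case by (simp add: conv_coeff)
qed (auto simp: fun_eq_iff coeff_1)

lemma degree_Pv: "degree (Pv d x) \<le> d - 1"
  by (rule degree_le) (auto simp: coeff_Pv)

lemma Pv_coeff: assumes "degree Q < n" shows "Pv n (coeff Q) = Q"
proof -
  have "{..<n} = {..n-1}" using assms by auto
  then show ?thesis using poly_as_sum_of_monoms'[of Q "n-1"] assms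
    by (simp add: Pv_def)
qed

lemma hankel_identity:
  assumes "k > 0" "n = q * (k - 1) + 1"
  shows "tensor_form (q * m) k (hankel_tensor h) y =
         tensor_form m n (hankel_tensor h) (conv_pow (trunc_vec k y) q)"
proof -
  have "degree (Pv k y ^ q) \<le> (k - 1) * q"
    using degree_power_le[of "Pv k y" q] degree_Pv[of k y]
    by (meson le_trans mult_le_mono1)
  then have "degree (Pv k y ^ q) < n" using assms by (simp add: mult.commute)
  then have "Pv n (conv_pow (trunc_vec k y) q) = Pv k y ^ q"
    by (simp add: coeff_Pv_trunc[symmetric] conv_pow_coeff Pv_coeff)
  then show ?thesis by (simp add: tf_poly power_mult)
qed


lemma Lf_deriv:
  "((\<lambda>t. Lf h (A * (P + smult t M) ^ p)) has_real_derivative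
      (of_nat p * Lf h (A * M * P ^ (p - 1)))) (at 0)"
proof (induction p arbitrary: A)
  case 0
  then show ?case by simp
next
  case (Suc p)
  have eq: "(\<lambda>t. Lf h (A * (P + smult t M) ^ Suc p)) =
            (\<lambda>t. Lf h ((A * P) * (P + smult t M) ^ p) + t * Lf h ((A * M) * (P + smult t M) ^ p))"
  proof
    fix t
    have "A * (P + smult t M) ^ Suc p = (A * P) * (P + smult t M) ^ p + smult t ((A * M) * (P + smult t M) ^ p)"
      by (simp add: algebra_simps)
    then show "Lf h (A * (P + smult t M) ^ Suc p) = Lf h ((A * P) * (P + smult t M) ^ p) + t * Lf h ((A * M) * (P + smult t M) ^ p)"
      by (simp add: Lf_add Lf_smult)
  qed
  have "((\<lambda>t. Lf h ((A * P) * (P + smult t M) ^ p) + t * Lf h ((A * M) * (P + smult t M) ^ p))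
        has_real_derivative (of_nat p * Lf h (A * P * M * P ^ (p - 1)) +
          (1 * Lf h ((A * M) * (P + smult 0 M) ^ p) + of_nat p * Lf h (A * M * M * P ^ (p - 1)) * 0))) (at 0)"
    by (intro DERIV_add DERIV_mult DERIV_ident Suc.IH)
  moreover have "of_nat p * Lf h (A * P * M * P ^ (p - 1)) + (1 * Lf h ((A * M) * (P + smult 0 M) ^ p) + of_nat p * Lf h (A * M * M * P ^ (p - 1)) * 0)
      = of_nat (Suc p) * Lf h (A * M * P ^ (Suc p - 1))"
  proof (cases p)
    case (Suc p')
    have e2: "Lf h (A * P * M * P ^ p') = Lf h (A * M * P ^ Suc p')" by (simp add: mult_ac)
    show ?thesis unfolding Suc diff_Suc_1 e2 by (simp add: algebra_simps)
  qed simp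
  ultimately show ?case unfolding eq by simp
qed


lemma tf_local: "(\<And>j. j < d \<Longrightarrow> x j = y j) \<Longrightarrow> tensor_form p d T x = tensor_form p d T y"
  unfolding tensor_form_def
  by (rule sum.cong) (auto simp: index_lists_def intro!: arg_cong[where f=prod_list] map_cong)

lemma prod_list_scale: "prod_list (map (\<lambda>j. c * (x::nat\<Rightarrow>real) j) is) = c ^ length is * prod_list (map x is)"
  by (induction "is") (auto simp: mult_ac)

lemma tf_scale: "tensor_form p d T (\<lambda>j. c * x j) = c ^ p * tensor_form p d T x"
  unfolding tensor_form_def sum_distrib_left
  by (rule sum.cong) (auto simp: index_lists_def prod_list_scale algebra_simps)

lemma cont_prod_list: "continuous_on UNIV (\<lambda>x::nat \<Rightarrow> real. prod_list (map x is))"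
  by (induction "is") (auto intro!: continuous_intros continuous_on_product_coordinates)

lemma cont_tf: "continuous_on UNIV (\<lambda>x. tensor_form p d T x)"
  unfolding tensor_form_def
  by (intro continuous_intros cont_prod_list)

lemma cont_psum: "continuous_on UNIV (\<lambda>x::nat\<Rightarrow>real. \<Sum>j<d. x j ^ p)"
  by (intro continuous_intros continuous_on_product_coordinates)

definition Sph :: "nat \<Rightarrow> nat \<Rightarrow> (nat \<Rightarrow> real) set" where
  "Sph p d = Pi UNIV (\<lambda>j. if j < d then {-1..1} else {0}) \<inter> {x. (\<Sum>j<d. x j ^ p) = 1}"

lemma compact_Sph: "compact (Sph p d)"
proof -
  have "compactin (product_topology (\<lambda>i. euclidean) UNIV) (PiE UNIV (\<lambda>j::nat. if j < d then {-1..1::real} else {0}))"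
    by (subst compactin_PiE) auto
  then have "compact (Pi UNIV (\<lambda>j::nat. if j < d then {-1..1::real} else {0}))"
    by (simp add: euclidean_product_topology PiE_UNIV_domain)
  moreover have "closed {x::nat\<Rightarrow>real. (\<Sum>j<d. x j ^ p) = 1}"
    by (rule closed_Collect_eq) (intro continuous_intros continuous_on_product_coordinates)+
  ultimately show ?thesis unfolding Sph_def by (rule compact_Int_closed)
qed

lemma Sph_ne: "0 < d \<Longrightarrow> 0 < p \<Longrightarrow> (\<lambda>j. if j = 0 then 1 else 0) \<in> Sph p d"
proof -
  assume "0 < d" "0 < p"
  then have "(\<Sum>j<d. (if j = (0::nat) then 1 else 0::real) ^ p) = (\<Sum>j<d. if j = 0 then 1 else 0)"
    by (intro sum.cong) auto
  then show ?thesis using \<open>0 < d\<close> unfolding Sph_def by auto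
qed


lemma psum_zero:
  fixes x :: "nat \<Rightarrow> real"
  assumes "even p" "(\<Sum>j<d. x j ^ p) = (0::real)" "j < d" shows "x j = 0"
proof -
  have "(\<Sum>j<d. x j ^ p) = 0 \<longleftrightarrow> (\<forall>j\<in>{..<d}. x j ^ p = 0)"
    by (rule sum_nonneg_eq_0_iff) (simp, auto simp: zero_le_even_power[OF assms(1)])

  then have "x j ^ p = 0" using assms by blast
  then show ?thesis by simp
qed

lemma psum_nonneg: "even p \<Longrightarrow> 0 \<le> (\<Sum>j<(d::nat). (x j::real) ^ p)"
  by (simp add: sum_nonneg zero_le_even_power)

lemma global_bound:
  fixes T :: "nat list \<Rightarrow> real"
  assumes ev: "even p" and p0: "0 < p" and x0: "x0 \<in> Sph p d"
    and mn: "\<forall>y\<in>Sph p d. tensor_form p d T x0 \<le> tensor_form p d T y"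
  shows "tensor_form p d T x0 * (\<Sum>j<d. x j ^ p) \<le> tensor_form p d T x"
proof -
  let ?s = "\<Sum>j<d. x j ^ p"
  let ?mu = "tensor_form p d T x0"
  have s0: "0 \<le> ?s" using psum_nonneg[OF ev] .
  show ?thesis
  proof (cases "?s = 0")
    case True
    have "tensor_form p d T x = tensor_form p d T (\<lambda>j. 0 * x j)"
      by (rule tf_local) (use psum_zero[OF ev True] in auto)
    also have "\<dots> = 0" using p0 tf_scale[of p d T 0 x] by simp
    finally show ?thesis using True by simp
  next
    case False
    then have spos: "0 < ?s" using s0 by simp
    define r where "r = root p ?s"
    have rpos: "0 < r" using spos p0 by (simp add: r_def)
    have rp: "r ^ p = ?s" using spos p0 by (simp add: r_def)
    define u where "u = (\<lambda>j. if j < d then x j / r else 0)"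
    have su: "(\<Sum>j<d. u j ^ p) = 1"
    proof -
      have "(\<Sum>j<d. u j ^ p) = (\<Sum>j<d. x j ^ p / r ^ p)"
        by (rule sum.cong) (auto simp: u_def power_divide)
      also have "\<dots> = 1" using rp spos by (simp add: sum_divide_distrib[symmetric])
      finally show ?thesis .
    qed
    have ub: "u j \<in> {-1..1}" if "j < d" for j
    proof (rule ccontr)
      assume "u j \<notin> {-1..1}"
      then have "1 < \<bar>u j\<bar>" by auto
      then have "1 < \<bar>u j\<bar> ^ p" using p0 by (simp add: one_less_power)
      then have "1 < u j ^ p" using ev by (simp add: power_even_abs)
      also have "u j ^ p \<le> (\<Sum>j<d. u j ^ p)"
        using that by (intro member_le_sum) (auto simp: zero_le_even_power[OF ev])
      finally show False using su by simp
    qed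
    have "u \<in> Sph p d" unfolding Sph_def using su ub by (auto simp: u_def)
    then have "?mu \<le> tensor_form p d T u" using mn by blast
    have "tensor_form p d T x = tensor_form p d T (\<lambda>j. r * u j)"
      by (rule tf_local) (use rpos in \<open>auto simp: u_def\<close>)
    also have "\<dots> = ?s * tensor_form p d T u" by (simp add: tf_scale rp)
    finally show ?thesis using \<open>?mu \<le> tensor_form p d T u\<close> s0
      by (metis mult.commute mult_left_mono)
  qed
qed


lemma Pv_perturb:
  assumes "i < d"
  shows "Pv d (\<lambda>j. x j + (if j = i then t else 0)) = Pv d x + smult t (monom 1 i)"
proof -
  have "Pv d (\<lambda>j. x j + (if j = i then t else 0)) = Pv d x + (\<Sum>j<d. monom (if j = i then t else 0) j)"
    by (simp add: Pv_def add_monom[symmetric] sum.distrib)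
  also have "(\<Sum>j<d. monom (if j = i then t else 0) j) = (\<Sum>j<d. if j = i then monom t i else 0)"
    by (rule sum.cong) auto
  also have "\<dots> = monom t i" using assms by simp
  finally show ?thesis by (simp add: smult_monom)
qed

lemma min_eig:
  assumes ev: "even p" and p0: "0 < p" and d0: "0 < d"
  shows "\<exists>mu. is_H_eigenvalue p d (hankel_tensor h) mu \<and>
           (\<forall>x. mu * (\<Sum>j<d. x j ^ p) \<le> tensor_form p d (hankel_tensor h) x)"
proof -
  let ?H = "hankel_tensor h"
  obtain x0 where x0: "x0 \<in> Sph p d" and mn: "\<forall>y\<in>Sph p d. tensor_form p d ?H x0 \<le> tensor_form p d ?H y"
  proof -
    have "Sph p d \<noteq> {}" using Sph_ne[OF d0 p0] by blast
    then show ?thesis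
      using continuous_attains_inf[OF compact_Sph _ continuous_on_subset[OF cont_tf subset_UNIV]] that
      by blast
  qed
  define mu where "mu = tensor_form p d ?H x0"
  have gb: "\<And>x. mu * (\<Sum>j<d. x j ^ p) \<le> tensor_form p d ?H x"
    unfolding mu_def by (rule global_bound[OF ev p0 x0 mn])
  have s1: "(\<Sum>j<d. x0 j ^ p) = 1" using x0 by (simp add: Sph_def)
  have nz: "\<exists>i<d. x0 i \<noteq> 0"
  proof (rule ccontr)
    assume "\<not> (\<exists>i<d. x0 i \<noteq> 0)"
    then have "(\<Sum>j<d. x0 j ^ p) = 0" using p0 by simp
    then show False using s1 by simp
  qed
  have eig: "tensor_apply p d ?H x0 i = mu * x0 i ^ (p - 1)" if i: "i < d" for i
  proof -
    let ?P = "Pv d x0"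
    let ?M = "monom 1 i :: real poly"
    define C where "C = (\<Sum>j\<in>{..<d} - {i}. x0 j ^ p)"
    have sumeq: "(\<Sum>j<d. (x0 j + (if j = i then t else 0)) ^ p) = (x0 i + t) ^ p + C" for t
    proof -
      have "(\<Sum>j<d. (x0 j + (if j = i then t else 0)) ^ p) =
            (x0 i + t) ^ p + (\<Sum>j\<in>{..<d} - {i}. (x0 j + (if j = i then t else 0)) ^ p)"
        using i by (subst sum.remove[of _ i]) auto
      also have "(\<Sum>j\<in>{..<d} - {i}. (x0 j + (if j = i then t else 0)) ^ p) = C"
        unfolding C_def by (rule sum.cong) auto
      finally show ?thesis .
    qed
    define g where "g t = Lf h (1 * (?P + smult t ?M) ^ p) - mu * ((x0 i + t) ^ p + C)" for t
    have gnn: "0 \<le> g t" for t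
    proof -
      have "mu * (\<Sum>j<d. (x0 j + (if j = i then t else 0)) ^ p) \<le>
            tensor_form p d ?H (\<lambda>j. x0 j + (if j = i then t else 0))" by (rule gb)
      then show ?thesis
        by (simp add: g_def sumeq tf_poly Pv_perturb[OF i])
    qed
    have g0: "g 0 = 0"
    proof -
      have "(x0 i + 0) ^ p + C = 1" using sumeq[of 0] s1 by simp
      then show ?thesis by (simp add: g_def mu_def tf_poly)
    qed
    have dC: "((\<lambda>t. (x0 i + t) ^ p + C) has_real_derivative (of_nat p * x0 i ^ (p - 1))) (at 0)"
      by (auto intro!: derivative_eq_intros)
    have dg: "(g has_real_derivative
        (of_nat p * Lf h (1 * ?M * ?P ^ (p - 1)) - mu * (of_nat p * x0 i ^ (p - 1)))) (at 0)"
      unfolding g_def[abs_def]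
      by (intro DERIV_diff DERIV_cmult Lf_deriv dC)
    have "of_nat p * Lf h (1 * ?M * ?P ^ (p - 1)) - mu * (of_nat p * x0 i ^ (p - 1)) = 0"
      by (rule DERIV_local_min[OF dg, of 1]) (use gnn g0 in auto)
    then have "Lf h (?M * ?P ^ (p - 1)) = mu * x0 i ^ (p - 1)"
      using p0 by (simp add: algebra_simps)
    then show ?thesis by (simp add: ta_poly[OF p0])
  qed
  have "is_H_eigenvalue p d ?H mu"
    unfolding is_H_eigenvalue_def using nz eig by blast
  then show ?thesis using gb by blast
qed


lemma psum_pos:
  fixes x :: "nat \<Rightarrow> real"
  assumes ev: "even p" and i: "i < d" and xi: "x i \<noteq> 0"
  shows "0 < (\<Sum>j<d. x j ^ p)"
proof -
  have "0 < \<bar>x i\<bar> ^ p" using xi by simp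
  then have "0 < x i ^ p" using ev by (simp add: power_even_abs)
  also have "x i ^ p \<le> (\<Sum>j<d. x j ^ p)"
    using i by (intro member_le_sum) (auto simp: zero_le_even_power[OF ev])
  finally show ?thesis .
qed

lemma eig_form:
  assumes "0 < p" "\<forall>i<d. tensor_apply p d T x i = lam * x i ^ (p - 1)"
  shows "tensor_form p d T x = lam * (\<Sum>j<d. x j ^ p)"
proof -
  have "tensor_form p d T x = (\<Sum>i<d. x i * (lam * x i ^ (p - 1)))"
    using assms by (simp add: tf_apply)
  also have "\<dots> = lam * (\<Sum>j<d. x j ^ p)"
    unfolding sum_distrib_left
    by (rule sum.cong) (use assms(1) in \<open>auto simp: power_eq_if mult_ac\<close>)
  finally show ?thesis .
qed

lemma eig_ge:
  assumes ev: "even p" and p0: "0 < p"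
    and bd: "\<forall>x. mu * (\<Sum>j<d. x j ^ p) \<le> tensor_form p d T x"
    and e: "is_H_eigenvalue p d T lam"
  shows "mu \<le> lam"
proof -
  obtain x i where i: "i < d" "x i \<noteq> 0" and ex: "\<forall>i<d. tensor_apply p d T x i = lam * x i ^ (p - 1)"
    using e unfolding is_H_eigenvalue_def by blast
  have sp: "0 < (\<Sum>j<d. x j ^ p)" using psum_pos[of p i d x] ev i by blast
  have "mu * (\<Sum>j<d. x j ^ p) \<le> lam * (\<Sum>j<d. x j ^ p)"
    using bd eig_form[OF p0 ex] by metis
  then show ?thesis using sp by simp
qed

lemma lambda_min_prop:
  assumes ev: "even p" and p0: "0 < p" and d0: "0 < d"
  shows "is_H_eigenvalue p d (hankel_tensor h) (lambda_min p d (hankel_tensor h)) \<and>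
    (\<forall>x. lambda_min p d (hankel_tensor h) * (\<Sum>j<d. x j ^ p) \<le> tensor_form p d (hankel_tensor h) x)"
proof -
  obtain mu where e: "is_H_eigenvalue p d (hankel_tensor h) mu"
    and bd: "\<forall>x. mu * (\<Sum>j<d. x j ^ p) \<le> tensor_form p d (hankel_tensor h) x"
    using min_eig[OF ev p0 d0] by blast
  have "lambda_min p d (hankel_tensor h) = mu"
    unfolding lambda_min_def
    by (rule cInf_eq_minimum) (use e eig_ge[OF ev p0 bd] in auto)
  then show ?thesis using e bd by simp
qed

lemma neg_tf: "tensor_form p d (hankel_tensor (\<lambda>s. - h s)) x = - tensor_form p d (hankel_tensor h) x"
  by (simp add: tensor_form_def hankel_tensor_def sum_negf)

lemma neg_ta: "tensor_apply p d (hankel_tensor (\<lambda>s. - h s)) x i = - tensor_apply p d (hankel_tensor h) x i"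
  by (simp add: tensor_apply_def hankel_tensor_def sum_negf)

lemma neg_eig: "is_H_eigenvalue p d (hankel_tensor (\<lambda>s. - h s)) lam \<longleftrightarrow> is_H_eigenvalue p d (hankel_tensor h) (- lam)"
  unfolding is_H_eigenvalue_def neg_ta
  by (intro ex_cong1 conj_cong refl all_cong1 imp_cong) auto

lemma lambda_max_prop:
  assumes ev: "even p" and p0: "0 < p" and d0: "0 < d"
  shows "is_H_eigenvalue p d (hankel_tensor h) (lambda_max p d (hankel_tensor h)) \<and>
    (\<forall>x. tensor_form p d (hankel_tensor h) x \<le> lambda_max p d (hankel_tensor h) * (\<Sum>j<d. x j ^ p))"
proof -
  obtain mu where e: "is_H_eigenvalue p d (hankel_tensor (\<lambda>s. - h s)) mu"
    and bd: "\<forall>x. mu * (\<Sum>j<d. x j ^ p) \<le> tensor_form p d (hankel_tensor (\<lambda>s. - h s)) x"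
    using min_eig[OF ev p0 d0] by blast
  have e': "is_H_eigenvalue p d (hankel_tensor h) (- mu)" using e neg_eig by blast
  have le: "lam \<le> - mu" if "is_H_eigenvalue p d (hankel_tensor h) lam" for lam
  proof -
    have "is_H_eigenvalue p d (hankel_tensor (\<lambda>s. - h s)) (- lam)" using that neg_eig by simp
    then have "mu \<le> - lam" by (rule eig_ge[OF ev p0 bd])
    then show ?thesis by simp
  qed
  have "lambda_max p d (hankel_tensor h) = - mu"
    unfolding lambda_max_def
    by (rule cSup_eq_maximum) (use e' le in auto)
  moreover have "\<forall>x. tensor_form p d (hankel_tensor h) x \<le> (- mu) * (\<Sum>j<d. x j ^ p)"
    using bd by (simp add: neg_tf) (metis le_minus_iff)
  ultimately show ?thesis using e' by simp
qed


lemma trunc_abs_sum: "(\<Sum>i\<le>j. \<bar>trunc_vec k y i\<bar>) \<le> (\<Sum>i<k. \<bar>y i\<bar>)"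
proof -
  have "(\<Sum>i\<le>j. \<bar>trunc_vec k y i\<bar>) = (\<Sum>i\<in>{..j} \<inter> {..<k}. \<bar>y i\<bar>)"
    by (rule sum.mono_neutral_cong_right) (auto simp: trunc_vec_def)
  also have "\<dots> \<le> (\<Sum>i<k. \<bar>y i\<bar>)" by (rule sum_mono2) auto
  finally show ?thesis .
qed

lemma conv_pow_bound: "\<bar>conv_pow (trunc_vec k y) q j\<bar> \<le> (\<Sum>i<k. \<bar>y i\<bar>) ^ q"
proof (induction q arbitrary: j)
  case 0
  then show ?case by simp
next
  case (Suc q)
  let ?S = "\<Sum>i<k. \<bar>y i\<bar>"
  have "\<bar>conv_pow (trunc_vec k y) (Suc q) j\<bar> \<le> (\<Sum>i\<le>j. \<bar>trunc_vec k y i\<bar> * \<bar>conv_pow (trunc_vec k y) q (j - i)\<bar>)"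
    by (simp add: conv_def abs_mult order_trans[OF sum_abs])
  also have "\<dots> \<le> (\<Sum>i\<le>j. \<bar>trunc_vec k y i\<bar> * ?S ^ q)"
    by (intro sum_mono mult_left_mono Suc.IH) auto
  also have "\<dots> = (\<Sum>i\<le>j. \<bar>trunc_vec k y i\<bar>) * ?S ^ q" by (simp add: sum_distrib_right)
  also have "\<dots> \<le> ?S * ?S ^ q"
    by (intro mult_right_mono trunc_abs_sum) auto
  finally show ?case by simp
qed

lemma ratio_bound:
  assumes k0: "0 < k"
  shows "pnorm_pow (q * (k - 1) + 1) m (conv_pow (trunc_vec k y) q) \<le>
         real (q * (k - 1) + 1) * real k ^ (q * m) * pnorm_pow k (q * m) y"
proof -
  let ?S = "\<Sum>i<k. \<bar>y i\<bar>"
  let ?n = "q * (k - 1) + 1"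
  define M where "M = Max ((\<lambda>i. \<bar>y i\<bar>) ` {..<k})"
  have Mge: "\<bar>y i\<bar> \<le> M" if "i < k" for i unfolding M_def using that by (intro Max_ge) auto
  have "M \<in> (\<lambda>i. \<bar>y i\<bar>) ` {..<k}" unfolding M_def by (rule Max_in) (use k0 in auto)
  then obtain i0 where i0: "i0 < k" "M = \<bar>y i0\<bar>" by auto
  have M0: "0 \<le> M" using i0 by simp
  have "?S \<le> (\<Sum>i<k. M)" by (intro sum_mono Mge) auto
  then have SM: "?S \<le> real k * M" by simp
  have S0: "0 \<le> ?S" by (simp add: sum_nonneg)
  have "pnorm_pow ?n m (conv_pow (trunc_vec k y) q) \<le> (\<Sum>j<?n. (?S ^ q) ^ m)"
    unfolding pnorm_pow_def by (intro sum_mono power_mono conv_pow_bound) auto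
  also have "\<dots> = real ?n * ?S ^ (q * m)" by (simp add: power_mult)
  also have "\<dots> \<le> real ?n * (real k * M) ^ (q * m)"
    by (intro mult_left_mono power_mono SM S0) auto
  also have "\<dots> = real ?n * real k ^ (q * m) * \<bar>y i0\<bar> ^ (q * m)"
    by (simp add: power_mult_distrib i0)
  also have "\<dots> \<le> real ?n * real k ^ (q * m) * pnorm_pow k (q * m) y"
    unfolding pnorm_pow_def using i0
    by (intro mult_left_mono member_le_sum) auto
  finally show ?thesis .
qed

lemma ratio_nonneg: "0 \<le> conv_ratio m q k y"
  unfolding conv_ratio_def pnorm_pow_def by (intro divide_nonneg_nonneg sum_nonneg) auto

lemma ratio_facts:
  assumes k0: "0 < k" and ev: "even m" and nz: "nonzero_vec k y"
  shows "c1_const m q k \<le> conv_ratio m q k y \<and> conv_ratio m q k y \<le> c2_const m q k \<and> 0 \<le> c1_const m q k"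
proof -
  let ?R = "{conv_ratio m q k y | y. nonzero_vec k y}"
  let ?B = "real (q * (k - 1) + 1) * real k ^ (q * m)"
  have ub: "conv_ratio m q k y' \<le> ?B" if nzy: "nonzero_vec k y'" for y'
  proof -
    obtain i where i: "i < k" "y' i \<noteq> 0" using nzy unfolding nonzero_vec_def by blast
    have "0 < \<bar>y' i\<bar> ^ (q * m)" using i by simp
    also have "\<dots> \<le> pnorm_pow k (q * m) y'" unfolding pnorm_pow_def using i
      by (intro member_le_sum) auto
    finally have pp: "0 < pnorm_pow k (q * m) y'" .
    show ?thesis unfolding conv_ratio_def using ratio_bound[OF k0, of q m y'] pp
      by (simp add: divide_le_eq)
  qed
  have ne: "?R \<noteq> {}" using nz by blast
  have "c1_const m q k \<le> conv_ratio m q k y"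
    unfolding c1_const_def by (rule cInf_lower) (use nz in \<open>auto intro!: bdd_belowI[where m=0] simp: ratio_nonneg\<close>)
  moreover have "conv_ratio m q k y \<le> c2_const m q k"
    unfolding c2_const_def by (rule cSup_upper) (use nz ub in \<open>auto intro!: bdd_aboveI[where M="?B"]\<close>)
  moreover have "0 \<le> c1_const m q k"
    unfolding c1_const_def by (rule cInf_greatest[OF ne]) (auto simp: ratio_nonneg)
  ultimately show ?thesis by blast
qed


lemma psum_pnorm: "even p \<Longrightarrow> pnorm_pow d p v = (\<Sum>j<d. v j ^ p)"
  by (simp add: pnorm_pow_def power_even_abs)

theorem theorem2:
  fixes m q k n :: nat and h :: "nat \<Rightarrow> real"
  assumes "even m" and "m > 0" and "q > 0" and "k > 0"
    and "n = q * (k - 1) + 1"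
  shows "(psd_tensor (q * m) k (hankel_tensor h) \<longrightarrow>
            lambda_min (q * m) k (hankel_tensor h) \<ge> c1_const m q k * lambda_min m n (hankel_tensor h))
       \<and> (\<not> psd_tensor (q * m) k (hankel_tensor h) \<longrightarrow>
            lambda_min (q * m) k (hankel_tensor h) \<ge> c2_const m q k * lambda_min m n (hankel_tensor h))
       \<and> (nsd_tensor (q * m) k (hankel_tensor h) \<longrightarrow>
            lambda_max (q * m) k (hankel_tensor h) \<le> c1_const m q k * lambda_max m n (hankel_tensor h))
       \<and> (\<not> nsd_tensor (q * m) k (hankel_tensor h) \<longrightarrow>
            lambda_max (q * m) k (hankel_tensor h) \<le> c2_const m q k * lambda_max m n (hankel_tensor h))"
proof -
  note ev = assms(1) and m0 = assms(2) and q0 = assms(3) and k0 = assms(4) and nd = assms(5)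
  let ?H = "hankel_tensor h"
  let ?Z = "\<lambda>y. conv_pow (trunc_vec k y) q"
  have evq: "even (q * m)" using ev by simp
  have qm0: "0 < q * m" using m0 q0 by simp
  have n0: "0 < n" using nd by simp
  let ?c1 = "c1_const m q k" and ?c2 = "c2_const m q k"
  have ident: "tensor_form (q * m) k ?H y = tensor_form m n ?H (?Z y)" for y
    using hankel_identity[OF k0 nd] .
  have Nz: "(\<Sum>j<n. ?Z y j ^ m) = conv_ratio m q k y * (\<Sum>j<k. y j ^ (q * m))"
    if nz: "nonzero_vec k y" for y
  proof -
    obtain i where i: "i < k" "y i \<noteq> 0" using nz unfolding nonzero_vec_def by blast
    have "0 < (\<Sum>j<k. y j ^ (q * m))" using psum_pos[of "q*m" i k y] evq i by blast
    then show ?thesis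
      unfolding conv_ratio_def psum_pnorm[OF ev] psum_pnorm[OF evq] nd[symmetric] by simp
  qed
  have Nz0: "0 \<le> (\<Sum>j<n. ?Z y j ^ m)" for y using psum_nonneg[OF ev] .
  let ?Lk = "lambda_min (q * m) k ?H" and ?Ln = "lambda_min m n ?H"
  have Lk: "is_H_eigenvalue (q * m) k ?H ?Lk" using lambda_min_prop[OF evq qm0 k0] by blast
  have Lkb: "\<And>x. ?Lk * (\<Sum>j<k. x j ^ (q * m)) \<le> tensor_form (q * m) k ?H x"
    using lambda_min_prop[OF evq qm0 k0] by blast
  have Lnb: "\<And>x. ?Ln * (\<Sum>j<n. x j ^ m) \<le> tensor_form m n ?H x"
    using lambda_min_prop[OF ev m0 n0] by blast
  obtain y where ynz: "nonzero_vec k y"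
    and yeig: "\<forall>i<k. tensor_apply (q * m) k ?H y i = ?Lk * y i ^ (q * m - 1)"
    using Lk unfolding is_H_eigenvalue_def nonzero_vec_def by blast
  let ?Ny = "\<Sum>j<k. y j ^ (q * m)" and ?r = "conv_ratio m q k y"
  have Ny0: "0 < ?Ny" using ynz psum_pos[of "q*m" _ k y] evq unfolding nonzero_vec_def by blast
  have rf: "?c1 \<le> ?r" "?r \<le> ?c2" "0 \<le> ?c1" using ratio_facts[OF k0 ev ynz] by auto
  have r0: "0 \<le> ?r" by (rule ratio_nonneg)
  have Tmin: "tensor_form (q * m) k ?H y = ?Lk * ?Ny" using eig_form[OF qm0 yeig] .
  have "?Ln * (?r * ?Ny) \<le> ?Lk * ?Ny"
    using Lnb[of "?Z y"] Nz[OF ynz] ident[of y] Tmin by simp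
  then have Lmain: "?Ln * ?r \<le> ?Lk" using Ny0 by (simp add: mult.assoc)
  have P1: "psd_tensor (q * m) k ?H \<longrightarrow> ?Lk \<ge> ?c1 * ?Ln"
  proof
    assume psd: "psd_tensor (q * m) k ?H"
    show "?Lk \<ge> ?c1 * ?Ln"
    proof (cases "0 \<le> ?Ln")
      case True
      then have "?Ln * ?c1 \<le> ?Ln * ?r" using rf by (simp add: mult_left_mono)
      then show ?thesis using Lmain by (simp add: mult.commute)
    next
      case False
      have "0 \<le> ?Lk * ?Ny" using psd Tmin unfolding psd_tensor_def by metis
      then have "0 \<le> ?Lk" using Ny0 by (simp add: zero_le_mult_iff)
      moreover have "?c1 * ?Ln \<le> 0" using False rf by (simp add: mult_nonneg_nonpos)
      ultimately show ?thesis by simp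
    qed
  qed
  have P2: "\<not> psd_tensor (q * m) k ?H \<longrightarrow> ?Lk \<ge> ?c2 * ?Ln"
  proof
    assume "\<not> psd_tensor (q * m) k ?H"
    then obtain x where x: "tensor_form (q * m) k ?H x < 0" unfolding psd_tensor_def using not_le by blast
    have "?Ln < 0"
    proof (rule ccontr)
      assume "\<not> ?Ln < 0"
      then have "0 \<le> ?Ln * (\<Sum>j<n. ?Z x j ^ m)" using Nz0 by simp
      then show False using Lnb[of "?Z x"] ident[of x] x by simp
    qed
    then have "?Ln * ?c2 \<le> ?Ln * ?r" using rf by (simp add: mult_left_mono_neg)
    then show "?Lk \<ge> ?c2 * ?Ln" using Lmain by (simp add: mult.commute)
  qed
  let ?Uk = "lambda_max (q * m) k ?H" and ?Un = "lambda_max m n ?H"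
  have Uk: "is_H_eigenvalue (q * m) k ?H ?Uk" using lambda_max_prop[OF evq qm0 k0] by blast
  have Unb: "\<And>x. tensor_form m n ?H x \<le> ?Un * (\<Sum>j<n. x j ^ m)"
    using lambda_max_prop[OF ev m0 n0] by blast
  obtain w where wnz: "nonzero_vec k w"
    and weig: "\<forall>i<k. tensor_apply (q * m) k ?H w i = ?Uk * w i ^ (q * m - 1)"
    using Uk unfolding is_H_eigenvalue_def nonzero_vec_def by blast
  let ?Nw = "\<Sum>j<k. w j ^ (q * m)" and ?s = "conv_ratio m q k w"
  have Nw0: "0 < ?Nw" using wnz psum_pos[of "q*m" _ k w] evq unfolding nonzero_vec_def by blast
  have sf: "?c1 \<le> ?s" "?s \<le> ?c2" "0 \<le> ?c1" using ratio_facts[OF k0 ev wnz] by auto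
  have Tmax: "tensor_form (q * m) k ?H w = ?Uk * ?Nw" using eig_form[OF qm0 weig] .
  have "?Uk * ?Nw \<le> ?Un * (?s * ?Nw)"
    using Unb[of "?Z w"] Nz[OF wnz] ident[of w] Tmax by simp
  then have Umain: "?Uk \<le> ?Un * ?s" using Nw0 by (simp add: mult.assoc)
  have P3: "nsd_tensor (q * m) k ?H \<longrightarrow> ?Uk \<le> ?c1 * ?Un"
  proof
    assume nsd: "nsd_tensor (q * m) k ?H"
    show "?Uk \<le> ?c1 * ?Un"
    proof (cases "?Un \<le> 0")
      case True
      then have "?Un * ?s \<le> ?Un * ?c1" using sf by (simp add: mult_left_mono_neg)
      then show ?thesis using Umain by (simp add: mult.commute)
    next
      case False
      have "?Uk * ?Nw \<le> 0" using nsd Tmax unfolding nsd_tensor_def by metis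
      then have "?Uk \<le> 0" using Nw0 by (simp add: mult_le_0_iff)
      moreover have "0 \<le> ?c1 * ?Un" using False sf by simp
      ultimately show ?thesis by simp
    qed
  qed
  have P4: "\<not> nsd_tensor (q * m) k ?H \<longrightarrow> ?Uk \<le> ?c2 * ?Un"
  proof
    assume "\<not> nsd_tensor (q * m) k ?H"
    then obtain x where x: "0 < tensor_form (q * m) k ?H x" unfolding nsd_tensor_def using not_le by blast
    have "0 < ?Un"
    proof (rule ccontr)
      assume "\<not> 0 < ?Un"
      then have "?Un * (\<Sum>j<n. ?Z x j ^ m) \<le> 0" using Nz0 by (simp add: mult_nonpos_nonneg)
      then show False using Unb[of "?Z x"] ident[of x] x by simp
    qed
    then have "?Un * ?s \<le> ?Un * ?c2" using sf by (simp add: mult_left_mono)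
    then show "?Uk \<le> ?c2 * ?Un" using Umain by (simp add: mult.commute)
  qed
  show ?thesis using P1 P2 P3 P4 by blast
qed

end
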